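(* Let $I\ge1$, $\eta>0$, $\lambda^*\in(0,\infty)^I$, $\alpha\in(0,\infty)^I$, $\hat\alpha=\sum_{i=1}^I1/\alpha_i$, $h_0\ge0$ and $h_1,\dots,h_I$ with $h_i>h_0$ for all $i$, $c\in\mathbb{R}_+^I$, and set $h=\min_i h_i-h_0$ and $r=\min_i c_i/\lambda_i^*$. Let $\chi$ be a one-dimensional Brownian motion with drift $a$, variance $\sigma^2$ and $\chi(0)\ge0$. (RBCP) A policy is a triple $(Z,U,\zeta)$ of $I$-dimensional processes nonanticipating with respect to $\chi$ such that, with $W(t)=\sum_{i=1}^IZ_i(t)$, $$W(t)=\chi(t)-\eta\int_0^tW(s)ds-\int_0^t\sum_{i=1}^I\zeta_i(s)ds+\sum_{i=1}^I\lambda_i^*U_i(t),\quad t\ge0,$$ $Z(t)\ge0$ for $t\ge0$, and $U$ is nondecreasing with $U(0)=0$; its cost is $\limsup_{t\to\infty}\frac1tE[\int_0^t(\sum_i\alpha_i\zeta_i(s)^2+\sum_i(h_i-h_0)Z_i(s))ds+c'U(t)]$. (EWF) A policy is a real-valued process $\theta$ nonanticipating with respect to $\chi$ such that, for some process $L$ that is nondecreasing with $L(0)=0$, the process $W(t)=\chi(t)-\eta\int_0^tW(s)ds-\int_0^t\theta(s)ds+L(t)$ satisfies $W(t)\ge0$ for $t\ge0$; its cost is $\limsup_{t\to\infty}\frac1tE[\int_0^t(\theta(s)^2/\hat\alpha+hW(s))ds+rL(t)]$. Then every admissible policy $\theta$ for the EWF yields an admissible policy $(Z,U,\zeta)$ for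 the RBCP with the same cost; and for every admissible policy $(Z,U,\zeta)$ of the RBCP there exists an admissible policy $\theta$ for the EWF whose cost is less than or equal to that of $(Z,U,\zeta)$ for the RBCP. *)

theory Defs
  imports "HOL-Probability.Probability"
begin

text \<open>One-dimensional Brownian motion with drift a and variance sigma^2 (sigma > 0 is the
standard deviation) on the probability space M: continuous paths on [0,inf), Gaussian
increments N(a(t-s), sigma^2 (t-s)), and independence of chi(t0) and the successive
increments chi(t_{k+1}) - chi(t_k) for any 0 <= t0 <= t1 <= ... \<close>
definition brownian_motion_drift ::
  "'a measure \<Rightarrow> (real \<Rightarrow> 'a \<Rightarrow> real) \<Rightarrow> real \<Rightarrow> real \<Rightarrow> bool" where
  "brownian_motion_drift M X a sd \<longleftrightarrow>
     prob_space M \<and>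
     (\<forall>t. X t \<in> borel_measurable M) \<and>
     (\<forall>\<omega>\<in>space M. continuous_on {0..} (\<lambda>t. X t \<omega>)) \<and>
     (\<forall>s t. 0 \<le> s \<longrightarrow> s < t \<longrightarrow>
        distributed M lborel (\<lambda>\<omega>. X t \<omega> - X s \<omega>)
          (normal_density (a * (t - s)) (sd * sqrt (t - s)))) \<and>
     (\<forall>(ts :: nat \<Rightarrow> real) n. 0 \<le> ts 0 \<and> (\<forall>k. ts k \<le> ts (Suc k)) \<longrightarrow>
        prob_space.indep_vars M (\<lambda>_. borel)
          (\<lambda>k \<omega>. if k = 0 then X (ts 0) \<omega> else X (ts k) \<omega> - X (ts (k - 1)) \<omega>) {..n})"

definition chi_filtration :: "'a measure \<Rightarrow> (real \<Rightarrow> 'a \<Rightarrow> real) \<Rightarrow> real \<Rightarrow> 'a measure" where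
  "chi_filtration M X t =
     sigma (space M) {X s -` B \<inter> space M | s B. 0 \<le> s \<and> s \<le> t \<and> B \<in> sets borel}"

definition nonanticipating ::
  "'a measure \<Rightarrow> (real \<Rightarrow> 'a \<Rightarrow> real) \<Rightarrow> (real \<Rightarrow> 'a \<Rightarrow> real) \<Rightarrow> bool" where
  "nonanticipating M X Y \<longleftrightarrow> (\<forall>t\<ge>0. Y t \<in> borel_measurable (chi_filtration M X t))"

definition rbcp_policy ::
  "'a measure \<Rightarrow> (real \<Rightarrow> 'a \<Rightarrow> real) \<Rightarrow> real \<Rightarrow> ('i::finite \<Rightarrow> real)
   \<Rightarrow> ('i \<Rightarrow> real \<Rightarrow> 'a \<Rightarrow> real) \<Rightarrow> ('i \<Rightarrow> real \<Rightarrow> 'a \<Rightarrow> real)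
   \<Rightarrow> ('i \<Rightarrow> real \<Rightarrow> 'a \<Rightarrow> real) \<Rightarrow> bool" where
  "rbcp_policy M X eta lam Z U zeta \<longleftrightarrow>
     (\<forall>i. nonanticipating M X (Z i) \<and> nonanticipating M X (U i) \<and> nonanticipating M X (zeta i)) \<and>
     (\<forall>\<omega>\<in>space M. \<forall>t\<ge>0.
        set_integrable lborel {0..t} (\<lambda>s. \<Sum>i\<in>UNIV. Z i s \<omega>) \<and>
        (\<forall>i. set_integrable lborel {0..t} (\<lambda>s. zeta i s \<omega>))) \<and>
     (\<forall>\<omega>\<in>space M. \<forall>t\<ge>0.
        (\<Sum>i\<in>UNIV. Z i t \<omega>) =
          X t \<omega> - eta * set_lebesgue_integral lborel {0..t} (\<lambda>s. \<Sum>i\<in>UNIV. Z i s \<omega>)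
              - set_lebesgue_integral lborel {0..t} (\<lambda>s. \<Sum>i\<in>UNIV. zeta i s \<omega>)
              + (\<Sum>i\<in>UNIV. lam i * U i t \<omega>)) \<and>
     (\<forall>\<omega>\<in>space M. \<forall>t\<ge>0. \<forall>i. 0 \<le> Z i t \<omega>) \<and>
     (\<forall>\<omega>\<in>space M. \<forall>i. U i 0 \<omega> = 0 \<and> mono_on {0..} (\<lambda>t. U i t \<omega>))"

text \<open>Long-run average cost of an RBCP policy (all integrands are nonnegative, so the
expectation and time integral are taken as nonnegative (extended) integrals).\<close>
definition rbcp_cost ::
  "'a measure \<Rightarrow> ('i::finite \<Rightarrow> real) \<Rightarrow> real \<Rightarrow> ('i \<Rightarrow> real) \<Rightarrow> ('i \<Rightarrow> real)
   \<Rightarrow> ('i \<Rightarrow> real \<Rightarrow> 'a \<Rightarrow> real) \<Rightarrow> ('i \<Rightarrow> real \<Rightarrow> 'a \<Rightarrow> real)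
   \<Rightarrow> ('i \<Rightarrow> real \<Rightarrow> 'a \<Rightarrow> real) \<Rightarrow> ennreal" where
  "rbcp_cost M alpha h0 hh c Z U zeta =
     Limsup at_top (\<lambda>t::real. ennreal (1 / t) *
       (\<integral>\<^sup>+\<omega>. ((\<integral>\<^sup>+s\<in>{0..t}. ennreal (\<Sum>i\<in>UNIV. alpha i * (zeta i s \<omega>)\<^sup>2 + (hh i - h0) * Z i s \<omega>) \<partial>lborel)
               + ennreal (\<Sum>i\<in>UNIV. c i * U i t \<omega>)) \<partial>M))"

definition ewf_policy ::
  "'a measure \<Rightarrow> (real \<Rightarrow> 'a \<Rightarrow> real) \<Rightarrow> real
   \<Rightarrow> (real \<Rightarrow> 'a \<Rightarrow> real) \<Rightarrow> (real \<Rightarrow> 'a \<Rightarrow> real) \<Rightarrow> (real \<Rightarrow> 'a \<Rightarrow> real) \<Rightarrow> bool" where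
  "ewf_policy M X eta theta L W \<longleftrightarrow>
     nonanticipating M X theta \<and> nonanticipating M X L \<and> nonanticipating M X W \<and>
     (\<forall>\<omega>\<in>space M. \<forall>t\<ge>0.
        set_integrable lborel {0..t} (\<lambda>s. W s \<omega>) \<and>
        set_integrable lborel {0..t} (\<lambda>s. theta s \<omega>)) \<and>
     (\<forall>\<omega>\<in>space M. \<forall>t\<ge>0.
        W t \<omega> = X t \<omega> - eta * set_lebesgue_integral lborel {0..t} (\<lambda>s. W s \<omega>)
                 - set_lebesgue_integral lborel {0..t} (\<lambda>s. theta s \<omega>) + L t \<omega>) \<and>
     (\<forall>\<omega>\<in>space M. \<forall>t\<ge>0. 0 \<le> W t \<omega>) \<and>
     (\<forall>\<omega>\<in>space M. L 0 \<omega> = 0 \<and> mono_on {0..} (\<lambda>t. L t \<omega>))"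

definition ewf_cost ::
  "'a measure \<Rightarrow> real \<Rightarrow> real \<Rightarrow> real
   \<Rightarrow> (real \<Rightarrow> 'a \<Rightarrow> real) \<Rightarrow> (real \<Rightarrow> 'a \<Rightarrow> real) \<Rightarrow> (real \<Rightarrow> 'a \<Rightarrow> real) \<Rightarrow> ennreal" where
  "ewf_cost M alphahat h r theta L W =
     Limsup at_top (\<lambda>t::real. ennreal (1 / t) *
       (\<integral>\<^sup>+\<omega>. ((\<integral>\<^sup>+s\<in>{0..t}. ennreal ((theta s \<omega>)\<^sup>2 / alphahat + h * W s \<omega>) \<partial>lborel)
               + ennreal (r * L t \<omega>)) \<partial>M))"

end

theory Submission
  imports Defs
begin

lemma set_integrable_sum_fin:
  fixes f :: "'i \<Rightarrow> real \<Rightarrow> real"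
  assumes "\<And>i. i \<in> S \<Longrightarrow> set_integrable lborel A (f i)"
  shows "set_integrable lborel A (\<lambda>s. \<Sum>i\<in>S. f i s)"
proof -
  have "integrable lborel (\<lambda>x. \<Sum>i\<in>S. indicator A x *\<^sub>R f i x)"
    using assms unfolding set_integrable_def by (intro Bochner_Integration.integrable_sum) auto
  then show ?thesis unfolding set_integrable_def by (simp add: sum_distrib_left)
qed

lemma cs_weighted:
  fixes zeta alpha :: "'i \<Rightarrow> real"
  assumes fin: "finite S" and pos: "\<And>i. i \<in> S \<Longrightarrow> alpha i > 0"
    and A: "A = (\<Sum>i\<in>S. 1 / alpha i)" and Apos: "A > 0"
  shows "(\<Sum>i\<in>S. zeta i)\<^sup>2 / A \<le> (\<Sum>i\<in>S. alpha i * (zeta i)\<^sup>2)"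
proof -
  define T where "T = (\<Sum>i\<in>S. zeta i)"
  have eq: "alpha i * (zeta i - T / (alpha i * A))\<^sup>2
        = alpha i * (zeta i)\<^sup>2 - 2 * T / A * zeta i + T\<^sup>2 / A\<^sup>2 * (1 / alpha i)" if "i \<in> S" for i
    using pos[OF that] Apos by (simp add: field_simps power2_eq_square)
  have "0 \<le> (\<Sum>i\<in>S. alpha i * (zeta i - T / (alpha i * A))\<^sup>2)"
    using pos by (intro sum_nonneg mult_nonneg_nonneg) (auto simp: less_imp_le)
  also have "\<dots> = (\<Sum>i\<in>S. alpha i * (zeta i)\<^sup>2) - 2 * T / A * T + T\<^sup>2 / A\<^sup>2 * A"
  proof -
    have "(\<Sum>i\<in>S. alpha i * (zeta i - T / (alpha i * A))\<^sup>2)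
       = (\<Sum>i\<in>S. alpha i * (zeta i)\<^sup>2 - 2 * T / A * zeta i + T\<^sup>2 / A\<^sup>2 * (1 / alpha i))"
      by (rule sum.cong[OF refl eq])
    also have "\<dots> = (\<Sum>i\<in>S. alpha i * (zeta i)\<^sup>2) - (\<Sum>i\<in>S. 2 * T / A * zeta i)
        + (\<Sum>i\<in>S. T\<^sup>2 / A\<^sup>2 * (1 / alpha i))"
      by (simp only: sum.distrib sum_subtractf)
    also have "(\<Sum>i\<in>S. 2 * T / A * zeta i) = 2 * T / A * T"
      unfolding T_def by (rule sum_distrib_left[symmetric])
    also have "(\<Sum>i\<in>S. T\<^sup>2 / A\<^sup>2 * (1 / alpha i)) = T\<^sup>2 / A\<^sup>2 * A"
      unfolding A by (rule sum_distrib_left[symmetric])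
    finally show ?thesis .
  qed
  also have "\<dots> = (\<Sum>i\<in>S. alpha i * (zeta i)\<^sup>2) - T\<^sup>2 / A"
    using Apos by (simp add: field_simps power2_eq_square)
  finally show ?thesis unfolding T_def by simp
qed

lemma cost_mono_aux:
  fixes f g :: "real \<Rightarrow> 'a \<Rightarrow> real \<Rightarrow> real" and F G :: "real \<Rightarrow> 'a \<Rightarrow> real"
  assumes "\<And>t \<omega> s. 0 \<le> t \<Longrightarrow> \<omega> \<in> space M \<Longrightarrow> s \<in> {0..t} \<Longrightarrow> f t \<omega> s \<le> g t \<omega> s"
    and "\<And>t \<omega>. 0 \<le> t \<Longrightarrow> \<omega> \<in> space M \<Longrightarrow> F t \<omega> \<le> G t \<omega>"
  shows "Limsup at_top (\<lambda>t::real. ennreal (1 / t) *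
       (\<integral>\<^sup>+\<omega>. ((\<integral>\<^sup>+s\<in>{0..t}. ennreal (f t \<omega> s) \<partial>lborel) + ennreal (F t \<omega>)) \<partial>M))
    \<le> Limsup at_top (\<lambda>t::real. ennreal (1 / t) *
       (\<integral>\<^sup>+\<omega>. ((\<integral>\<^sup>+s\<in>{0..t}. ennreal (g t \<omega> s) \<partial>lborel) + ennreal (G t \<omega>)) \<partial>M))"
proof (rule Limsup_mono)
  show "\<forall>\<^sub>F t in at_top. ennreal (1 / t) *
       (\<integral>\<^sup>+\<omega>. ((\<integral>\<^sup>+s\<in>{0..t}. ennreal (f t \<omega> s) \<partial>lborel) + ennreal (F t \<omega>)) \<partial>M)
    \<le> ennreal (1 / t) *
       (\<integral>\<^sup>+\<omega>. ((\<integral>\<^sup>+s\<in>{0..t}. ennreal (g t \<omega> s) \<partial>lborel) + ennreal (G t \<omega>)) \<partial>M)"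
    unfolding eventually_at_top_linorder
  proof (intro exI[of _ 0] allI impI)
    fix t :: real assume t: "0 \<le> t"
    show "ennreal (1 / t) *
       (\<integral>\<^sup>+\<omega>. ((\<integral>\<^sup>+s\<in>{0..t}. ennreal (f t \<omega> s) \<partial>lborel) + ennreal (F t \<omega>)) \<partial>M)
    \<le> ennreal (1 / t) *
       (\<integral>\<^sup>+\<omega>. ((\<integral>\<^sup>+s\<in>{0..t}. ennreal (g t \<omega> s) \<partial>lborel) + ennreal (G t \<omega>)) \<partial>M)"
    proof (intro mult_left_mono nn_integral_mono add_mono)
      fix \<omega> assume w: "\<omega> \<in> space M"
      show "ennreal (F t \<omega>) \<le> ennreal (G t \<omega>)" using assms(2)[OF t w] by (simp add: ennreal_leI)
      fix s
      show "ennreal (f t \<omega> s) * indicator {0..t} s \<le> ennreal (g t \<omega> s) * indicator {0..t} s"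
        using assms(1)[OF t w, of s] by (cases "s \<in> {0..t}") (auto intro: ennreal_leI)
    qed auto
  qed
qed

lemma sum_single:
  fixes g :: "'i::finite \<Rightarrow> real"
  assumes "\<And>i. i \<noteq> i0 \<Longrightarrow> g i = 0"
  shows "(\<Sum>i\<in>UNIV. g i) = g i0"
proof -
  have "(\<Sum>i\<in>UNIV. g i) = (\<Sum>i\<in>UNIV. if i = i0 then g i0 else 0)"
    using assms by (intro sum.cong) auto
  also have "\<dots> = g i0" by simp
  finally show ?thesis .
qed

lemma ex_argmin:
  fixes f :: "'i::finite \<Rightarrow> real" shows "\<exists>i0. f i0 = (MIN i. f i)"
proof -
  have "(MIN i. f i) \<in> range f" by (rule Min_in) auto
  then show ?thesis by (metis rangeE)
qed

theorem proposition2: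
  fixes M :: "'a measure" and chi :: "real \<Rightarrow> 'a \<Rightarrow> real"
    and a sigma eta h0 :: real
    and lam alpha hh c :: "'i::finite \<Rightarrow> real"
  assumes "brownian_motion_drift M chi a sigma" and "sigma > 0"
    and "\<forall>\<omega>\<in>space M. 0 \<le> chi 0 \<omega>"
    and "eta > 0"
    and "\<forall>i. lam i > 0" and "\<forall>i. alpha i > 0"
    and "h0 \<ge> 0" and "\<forall>i. hh i > h0" and "\<forall>i. c i \<ge> 0"
  shows "(\<forall>theta L W. ewf_policy M chi eta theta L W \<longrightarrow>
            (\<exists>Z U zeta. rbcp_policy M chi eta lam Z U zeta \<and>
               rbcp_cost M alpha h0 hh c Z U zeta =
               ewf_cost M (\<Sum>i\<in>UNIV. 1 / alpha i) ((MIN i. hh i) - h0) (MIN i. c i / lam i)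
                 theta L W)) \<and>
         (\<forall>Z U zeta. rbcp_policy M chi eta lam Z U zeta \<longrightarrow>
            (\<exists>theta L W. ewf_policy M chi eta theta L W \<and>
               ewf_cost M (\<Sum>i\<in>UNIV. 1 / alpha i) ((MIN i. hh i) - h0) (MIN i. c i / lam i)
                 theta L W
               \<le> rbcp_cost M alpha h0 hh c Z U zeta))"
proof -
  note lam = assms(5) and alpha = assms(6) and hh = assms(8) and c = assms(9)
  define A where "A = (\<Sum>i\<in>UNIV. 1 / alpha (i::'i))"
  define h where "h = (MIN i. hh i) - h0"
  define r where "r = (MIN i. c i / lam i)"
  have Apos: "A > 0" unfolding A_def using alpha
    by (intro sum_pos) auto
  obtain i0 where i0: "hh i0 = (MIN i. hh i)" using ex_argmin[of hh] by blast
  obtain j0 where j0: "c j0 / lam j0 = (MIN i. c i / lam i)"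
    using ex_argmin[of "\<lambda>i. c i / lam i"] by blast
  have hle: "h \<le> hh i - h0" for i unfolding h_def by (simp add: Min_le)
  have rle: "r * lam i \<le> c i" for i
  proof -
    have "r \<le> c i / lam i" unfolding r_def by (simp add: Min_le)
    then show ?thesis using lam by (simp add: pos_le_divide_eq)
  qed
  have part1: "\<exists>Z U zeta. rbcp_policy M chi eta lam Z U zeta \<and>
               rbcp_cost M alpha h0 hh c Z U zeta = ewf_cost M A h r theta L W"
    if P: "ewf_policy M chi eta theta L W" for theta L W
  proof -
    define Z where "Z = (\<lambda>i t \<omega>. if i = i0 then W t \<omega> else (0::real))"
    define U where "U = (\<lambda>i t \<omega>. if i = j0 then L t \<omega> / lam j0 else (0::real))"
    define zeta where "zeta = (\<lambda>i t \<omega>. theta t \<omega> * ((1 / alpha i) / A))"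
    have sZ: "(\<Sum>i\<in>UNIV. Z i t \<omega>) = W t \<omega>" for t \<omega> unfolding Z_def by simp
    have sU: "(\<Sum>i\<in>UNIV. lam i * U i t \<omega>) = L t \<omega>" for t \<omega>
    proof -
      have "(\<lambda>i. lam i * U i t \<omega>) = (\<lambda>i. if i = j0 then L t \<omega> else 0)"
        using lam by (auto simp: U_def fun_eq_iff less_imp_neq[symmetric])
      then have "(\<Sum>i\<in>UNIV. lam i * U i t \<omega>) = (\<Sum>i\<in>UNIV. if i = j0 then L t \<omega> else 0)"
        by (rule arg_cong)
      then show ?thesis by (simp only: sum.delta' finite_UNIV) simp
    qed
    have sz: "(\<Sum>i\<in>UNIV. zeta i t \<omega>) = theta t \<omega>" for t \<omega>
    proof -
      have "(\<Sum>i\<in>UNIV. zeta i t \<omega>) = theta t \<omega> * ((\<Sum>i\<in>UNIV. 1 / alpha i) / A)"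
        unfolding zeta_def by (simp only: sum_distrib_left[symmetric] sum_divide_distrib[symmetric])
      then show ?thesis using Apos unfolding A_def[symmetric] by simp
    qed
    note Pu = P[unfolded ewf_policy_def]
    have na: "nonanticipating M chi theta" "nonanticipating M chi L" "nonanticipating M chi W"
      using Pu by blast+
    have Pi: "\<forall>\<omega>\<in>space M. \<forall>t\<ge>0. set_integrable lborel {0..t} (\<lambda>s. W s \<omega>) \<and>
        set_integrable lborel {0..t} (\<lambda>s. theta s \<omega>)"
      using Pu by (elim conjE) assumption
    have Pe: "\<forall>\<omega>\<in>space M. \<forall>t\<ge>0. W t \<omega> = chi t \<omega> - eta * set_lebesgue_integral lborel {0..t} (\<lambda>s. W s \<omega>)
                 - set_lebesgue_integral lborel {0..t} (\<lambda>s. theta s \<omega>) + L t \<omega>"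
      using Pu by (elim conjE) assumption
    have Pn: "\<forall>\<omega>\<in>space M. \<forall>t\<ge>0. 0 \<le> W t \<omega>"
      using Pu by (elim conjE) assumption
    have Pl: "\<forall>\<omega>\<in>space M. L 0 \<omega> = 0 \<and> mono_on {0..} (\<lambda>t. L t \<omega>)"
      using Pu by (elim conjE) assumption
    have nac: "nonanticipating M chi (\<lambda>t \<omega>. k)" for k unfolding nonanticipating_def by simp
    have nam: "nonanticipating M chi (\<lambda>t \<omega>. Y t \<omega> * k)" if "nonanticipating M chi Y" for Y k
      using that unfolding nonanticipating_def by (auto intro!: borel_measurable_times borel_measurable_const)
    have nad: "nonanticipating M chi (\<lambda>t \<omega>. Y t \<omega> / k)" if "nonanticipating M chi Y" for Y k
      using that unfolding nonanticipating_def by (auto intro!: borel_measurable_divide borel_measurable_const)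
    have pol: "rbcp_policy M chi eta lam Z U zeta"
      unfolding rbcp_policy_def
    proof (intro conjI allI ballI impI)
      fix i
      show "nonanticipating M chi (Z i)"
        by (cases "i = i0") (simp_all add: Z_def na nac)
      show "nonanticipating M chi (U i)"
        by (cases "i = j0") (simp_all add: U_def nad na nac)
      show "nonanticipating M chi (zeta i)"
        unfolding zeta_def by (rule nam[OF na(1)])
    next
      fix \<omega> t assume w: "\<omega> \<in> space M" and t: "(0::real) \<le> t"
      show "set_integrable lborel {0..t} (\<lambda>s. \<Sum>i\<in>UNIV. Z i s \<omega>)"
        unfolding sZ using Pi w t by blast
      fix i
      have "set_integrable lborel {0..t} (\<lambda>s. theta s \<omega>)"
        using Pi w t by blast
      then show "set_integrable lborel {0..t} (\<lambda>s. zeta i s \<omega>)"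
        unfolding zeta_def by (rule set_integrable_mult_left)
    next
      fix \<omega> t assume w: "\<omega> \<in> space M" and t: "(0::real) \<le> t"
      show "(\<Sum>i\<in>UNIV. Z i t \<omega>) = chi t \<omega> -
          eta * set_lebesgue_integral lborel {0..t} (\<lambda>s. \<Sum>i\<in>UNIV. Z i s \<omega>) -
          set_lebesgue_integral lborel {0..t} (\<lambda>s. \<Sum>i\<in>UNIV. zeta i s \<omega>) +
          (\<Sum>i\<in>UNIV. lam i * U i t \<omega>)"
        unfolding sZ sz sU using Pe w t by blast
      fix i
      show "0 \<le> Z i t \<omega>" unfolding Z_def using Pn w t by simp
    next
      fix \<omega> i assume w: "\<omega> \<in> space M"
      have L: "L 0 \<omega> = 0" "mono_on {0..} (\<lambda>t. L t \<omega>)" using Pl w by blast+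
      show "U i 0 \<omega> = 0" unfolding U_def using L by simp
      show "mono_on {0..} (\<lambda>t. U i t \<omega>)"
      proof (cases "i = j0")
        case True
        show ?thesis unfolding U_def using True L(2) lam
          by (auto intro!: mono_onI divide_right_mono dest: mono_onD simp: less_imp_le)
      next
        case False
        then show ?thesis unfolding U_def by (auto intro: mono_onI)
      qed
    qed
    have e1: "(\<Sum>i\<in>UNIV. alpha i * (zeta i s \<omega>)\<^sup>2 + (hh i - h0) * Z i s \<omega>)
          = (theta s \<omega>)\<^sup>2 / A + h * W s \<omega>" for s \<omega>
    proof -
      have t1: "alpha i * (zeta i s \<omega>)\<^sup>2 = (theta s \<omega>)\<^sup>2 / A\<^sup>2 * (1 / alpha i)" for i
        unfolding zeta_def using alpha Apos
        by (simp add: field_simps power2_eq_square)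
      have "(\<Sum>i\<in>UNIV. alpha i * (zeta i s \<omega>)\<^sup>2) = (theta s \<omega>)\<^sup>2 / A"
        unfolding t1 sum_distrib_left[symmetric] A_def[symmetric] using Apos
        by (simp add: power2_eq_square)
      moreover have "(\<Sum>i\<in>UNIV. (hh i - h0) * Z i s \<omega>) = h * W s \<omega>"
        unfolding h_def i0[symmetric] by (subst sum_single[of i0]) (auto simp: Z_def)
      ultimately show ?thesis by (simp add: sum.distrib)
    qed
    have e2: "(\<Sum>i\<in>UNIV. c i * U i t \<omega>) = r * L t \<omega>" for t \<omega>
      unfolding r_def j0[symmetric] by (subst sum_single[of j0]) (auto simp: U_def)
    have "rbcp_cost M alpha h0 hh c Z U zeta = ewf_cost M A h r theta L W"
      unfolding rbcp_cost_def ewf_cost_def e1 e2 ..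
    with pol show ?thesis by blast
  qed
  have part2: "\<exists>theta L W. ewf_policy M chi eta theta L W \<and>
               ewf_cost M A h r theta L W \<le> rbcp_cost M alpha h0 hh c Z U zeta"
    if P: "rbcp_policy M chi eta lam Z U zeta" for Z U zeta
  proof -
    define W where "W = (\<lambda>t \<omega>. \<Sum>i\<in>UNIV. Z i t \<omega>)"
    define L where "L = (\<lambda>t \<omega>. \<Sum>i\<in>UNIV. lam i * U i t \<omega>)"
    define theta where "theta = (\<lambda>t \<omega>. \<Sum>i\<in>UNIV. zeta i t \<omega>)"
    note Pu = P[unfolded rbcp_policy_def]
    have na: "\<forall>i. nonanticipating M chi (Z i) \<and> nonanticipating M chi (U i) \<and> nonanticipating M chi (zeta i)"
      using Pu by (elim conjE) assumption
    have Pi: "\<forall>\<omega>\<in>space M. \<forall>t\<ge>0.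
        set_integrable lborel {0..t} (\<lambda>s. \<Sum>i\<in>UNIV. Z i s \<omega>) \<and>
        (\<forall>i. set_integrable lborel {0..t} (\<lambda>s. zeta i s \<omega>))"
      using Pu by (elim conjE) assumption
    have Pe: "\<forall>\<omega>\<in>space M. \<forall>t\<ge>0.
        (\<Sum>i\<in>UNIV. Z i t \<omega>) =
          chi t \<omega> - eta * set_lebesgue_integral lborel {0..t} (\<lambda>s. \<Sum>i\<in>UNIV. Z i s \<omega>)
              - set_lebesgue_integral lborel {0..t} (\<lambda>s. \<Sum>i\<in>UNIV. zeta i s \<omega>)
              + (\<Sum>i\<in>UNIV. lam i * U i t \<omega>)"
      using Pu by (elim conjE) assumption
    have Pn: "\<forall>\<omega>\<in>space M. \<forall>t\<ge>0. \<forall>i. 0 \<le> Z i t \<omega>"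
      using Pu by (elim conjE) assumption
    have Pl: "\<forall>\<omega>\<in>space M. \<forall>i. U i 0 \<omega> = 0 \<and> mono_on {0..} (\<lambda>t. U i t \<omega>)"
      using Pu by (elim conjE) assumption
    have nas: "nonanticipating M chi (\<lambda>t \<omega>. \<Sum>i\<in>UNIV. Y i t \<omega>)"
      if "\<And>i. nonanticipating M chi (Y i)" for Y :: "'i \<Rightarrow> real \<Rightarrow> 'a \<Rightarrow> real"
      using that unfolding nonanticipating_def by (auto intro!: borel_measurable_sum)
    have nam: "nonanticipating M chi (\<lambda>t \<omega>. k * Y t \<omega>)" if "nonanticipating M chi Y" for Y k
      using that unfolding nonanticipating_def by (auto intro!: borel_measurable_times borel_measurable_const)
    have Uge: "0 \<le> U i t \<omega>" if "\<omega> \<in> space M" "0 \<le> t" for i t \<omega>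
    proof -
      have "U i 0 \<omega> = 0" "mono_on {0..} (\<lambda>t. U i t \<omega>)" using Pl that by blast+
      then show ?thesis using that mono_onD[of "{0..}" "\<lambda>t. U i t \<omega>" 0 t] by auto
    qed
    have pol: "ewf_policy M chi eta theta L W"
      unfolding ewf_policy_def
    proof (intro conjI allI ballI impI)
      show "nonanticipating M chi theta" unfolding theta_def
        using na by (intro nas) blast
      show "nonanticipating M chi W" unfolding W_def
        using na by (intro nas) blast
      show "nonanticipating M chi L" unfolding L_def
        using na by (intro nas nam) blast
    next
      fix \<omega> t assume w: "\<omega> \<in> space M" and t: "(0::real) \<le> t"
      show "set_integrable lborel {0..t} (\<lambda>s. W s \<omega>)"
        unfolding W_def using Pi w t by blast
      show "set_integrable lborel {0..t} (\<lambda>s. theta s \<omega>)"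
        unfolding theta_def using Pi w t
        by (intro set_integrable_sum_fin) blast
      show "W t \<omega> = chi t \<omega> - eta * set_lebesgue_integral lborel {0..t} (\<lambda>s. W s \<omega>)
            - set_lebesgue_integral lborel {0..t} (\<lambda>s. theta s \<omega>) + L t \<omega>"
        unfolding W_def theta_def L_def using Pe w t by blast
      show "0 \<le> W t \<omega>" unfolding W_def using Pn w t
        by (intro sum_nonneg) blast
    next
      fix \<omega> assume w: "\<omega> \<in> space M"
      show "L 0 \<omega> = 0" unfolding L_def using Pl w by simp
      have m: "mono_on {0..} (\<lambda>t. U i t \<omega>)" for i using Pl w by blast
      show "mono_on {0..} (\<lambda>t. L t \<omega>)" unfolding L_def
      proof (rule mono_onI)
        fix x y :: real assume "x \<in> {0..}" "y \<in> {0..}" "x \<le> y"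
        then show "(\<Sum>i\<in>UNIV. lam i * U i x \<omega>) \<le> (\<Sum>i\<in>UNIV. lam i * U i y \<omega>)"
          using lam by (intro sum_mono mult_left_mono mono_onD[OF m]) (auto simp: less_imp_le)
      qed
    qed
    have "ewf_cost M A h r theta L W \<le> rbcp_cost M alpha h0 hh c Z U zeta"
      unfolding ewf_cost_def rbcp_cost_def
    proof (rule cost_mono_aux)
      fix t \<omega> s assume t: "(0::real) \<le> t" and w: "\<omega> \<in> space M" and s: "s \<in> {0..t}"
      have Zge: "0 \<le> Z i s \<omega>" for i using Pn w s by simp
      have 1: "(theta s \<omega>)\<^sup>2 / A \<le> (\<Sum>i\<in>UNIV. alpha i * (zeta i s \<omega>)\<^sup>2)"
        unfolding theta_def using alpha Apos by (intro cs_weighted[OF _ _ A_def]) auto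
      have "h * W s \<omega> = (\<Sum>i\<in>UNIV. h * Z i s \<omega>)" unfolding W_def by (simp add: sum_distrib_left)
      also have "\<dots> \<le> (\<Sum>i\<in>UNIV. (hh i - h0) * Z i s \<omega>)"
        using hle Zge by (intro sum_mono mult_right_mono) auto
      finally show "(theta s \<omega>)\<^sup>2 / A + h * W s \<omega>
          \<le> (\<Sum>i\<in>UNIV. alpha i * (zeta i s \<omega>)\<^sup>2 + (hh i - h0) * Z i s \<omega>)"
        using 1 by (simp add: sum.distrib)
    next
      fix t \<omega> assume t: "(0::real) \<le> t" and w: "\<omega> \<in> space M"
      have "r * L t \<omega> = (\<Sum>i\<in>UNIV. (r * lam i) * U i t \<omega>)" unfolding L_def
        by (simp add: sum_distrib_left mult.assoc)
      also have "\<dots> \<le> (\<Sum>i\<in>UNIV. c i * U i t \<omega>)"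
        using rle Uge[OF w t] by (intro sum_mono mult_right_mono) auto
      finally show "r * L t \<omega> \<le> (\<Sum>i\<in>UNIV. c i * U i t \<omega>)" .
    qed
    with pol show ?thesis by blast
  qed
  show ?thesis using part1 part2 unfolding A_def h_def r_def by blast
qed

end
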